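(* For a finite set $A \subset \mathbb{R}$ define the set of popular differences \[ P = \left\{ x \in A-A : \delta_A(x) \geq \frac{1}{11}\frac{|A|^2}{|A-A|} \right\}. \] Then \[ |A|^6 \ll E_3(A) \cdot \sum_{x\in P} \delta_P(x). \]
   Context: For finite $X, Y\subset\mathbb{R}$, $\delta_{X,Y}(x) = \#\{(u,v)\in X\times Y : x = u - v\}$ and $\delta_X = \delta_{X,X}$. $E_3(A) = \sum_{x} \delta_A(x)^3$. The notation $F \ll G$ means $F = O(G)$ as $|A| \to \infty$, i.e. $F \le C G$ for an absolute constant $C$ (for all sufficiently large $|A|$). *)

theory Defs
  imports Complex_Main
begin

definition diffset :: "real set \<Rightarrow> real set \<Rightarrow> real set" where
  "diffset X Y = {u - v | u v. u \<in> X \<and> v \<in> Y}"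

definition delta :: "real set \<Rightarrow> real set \<Rightarrow> real \<Rightarrow> nat" where
  "delta X Y x = card {(u, v). u \<in> X \<and> v \<in> Y \<and> x = u - v}"

text \<open>E_3(A) = sum over x of delta_A(x)^3; only x in A - A contribute.\<close>
definition E3 :: "real set \<Rightarrow> nat" where
  "E3 A = (\<Sum>x\<in>diffset A A. (delta A A x) ^ 3)"

definition popular :: "real set \<Rightarrow> real set" where
  "popular A = {x \<in> diffset A A.
     real (delta A A x) \<ge> (1/11) * (real (card A))^2 / real (card (diffset A A))}"

end

theory Submission
  imports Defs "HOL-Analysis.Convex"
begin

lemma finite_diffset: "finite A \<Longrightarrow> finite (diffset A A)"
proof -
  assume f: "finite A"
  have "diffset A A = (\<lambda>(u,v). u - v) ` (A \<times> A)"
    unfolding diffset_def by auto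
  thus ?thesis using f by simp
qed

lemma popular_sub: "popular A \<subseteq> diffset A A"
  unfolding popular_def by auto

lemma finite_R: "finite A \<Longrightarrow> finite {(u, v). u \<in> A \<and> v \<in> A \<and> x = u - v}"
  by (rule finite_subset[of _ "A \<times> A"]) auto

lemma bad_bound:
  assumes fA: "finite A"
  shows "real (card {(a,b). a \<in> A \<and> b \<in> A \<and> a - b \<notin> popular A}) \<le> (real (card A))^2 / 11"
proof -
  define D where "D = diffset A A"
  define P where "P = popular A"
  define Bad where "Bad = {(a,b). a \<in> A \<and> b \<in> A \<and> a - b \<notin> P}"
  define n where "n = card A"
  have fD: "finite D" using fA finite_diffset D_def by auto
  have fBad: "finite Bad" by (rule finite_subset[of _ "A \<times> A"]) (auto simp: Bad_def fA)
  have img: "(\<lambda>(a,b). a - b) ` Bad \<subseteq> D - P"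
    unfolding Bad_def D_def diffset_def by auto
  have "card Bad = (\<Sum>y\<in>D - P. card {x \<in> Bad. (\<lambda>(a,b). a - b) x = y})"
    using sum.group[OF fBad _ img, of "\<lambda>_. 1::nat"] fD by simp
  also have "\<dots> = (\<Sum>y\<in>D - P. delta A A y)"
  proof (rule sum.cong)
    fix y assume "y \<in> D - P"
    hence "{x \<in> Bad. (\<lambda>(a,b). a - b) x = y} = {(u, v). u \<in> A \<and> v \<in> A \<and> y = u - v}"
      unfolding Bad_def by auto
    thus "card {x \<in> Bad. (\<lambda>(a,b). a - b) x = y} = delta A A y" by (simp add: delta_def)
  qed simp
  finally have cb: "real (card Bad) = (\<Sum>y\<in>D - P. real (delta A A y))" by simp
  also have "\<dots> \<le> (\<Sum>y\<in>D - P. (1/11) * (real n)^2 / real (card D))"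
  proof (rule sum_mono)
    fix y assume "y \<in> D - P"
    thus "real (delta A A y) \<le> (1/11) * (real n)^2 / real (card D)"
      unfolding P_def popular_def D_def n_def by auto
  qed
  also have "\<dots> = real (card (D - P)) * ((1/11) * (real n)^2 / real (card D))" by simp
  also have "\<dots> \<le> (real n)^2 / 11"
  proof (cases "card D = 0")
    case True
    hence "D = {}" using fD by simp
    thus ?thesis by simp
  next
    case False
    have "card (D - P) \<le> card D" using fD by (simp add: card_mono)
    hence "real (card (D - P)) * ((1/11) * (real n)^2 / real (card D))
        \<le> real (card D) * ((1/11) * (real n)^2 / real (card D))"
      by (intro mult_right_mono) auto
    also have "\<dots> = (real n)^2 / 11" using False by simp
    finally show ?thesis .
  qed
  finally show ?thesis unfolding Bad_def P_def n_def .
qed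

lemma inj_bound:
  assumes "inj_on h B" "h ` B \<subseteq> X \<times> A" "finite X" "finite A"
  shows "card B \<le> card X * card A"
proof -
  have "card B \<le> card (X \<times> A)" using card_inj_on_le[OF assms(1,2)] assms(3,4) by simp
  thus ?thesis by (simp add: card_cartesian_product)
qed

lemma T_bound:
  assumes fA: "finite A"
  defines "P \<equiv> popular A"
  shows "8/11 * (real (card A))^3 \<le> real (card {(a,b,c). a \<in> A \<and> b \<in> A \<and> c \<in> A \<and> a - b \<in> P \<and> a - c \<in> P \<and> b - c \<in> P})"
proof -
  define T where "T = {(a,b,c). a \<in> A \<and> b \<in> A \<and> c \<in> A \<and> a - b \<in> P \<and> a - c \<in> P \<and> b - c \<in> P}"
  define Bad where "Bad = {(a,b). a \<in> A \<and> b \<in> A \<and> a - b \<notin> P}"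
  define B1 where "B1 = {(a,b,c). a \<in> A \<and> b \<in> A \<and> c \<in> A \<and> a - b \<notin> P}"
  define B2 where "B2 = {(a,b,c). a \<in> A \<and> b \<in> A \<and> c \<in> A \<and> a - c \<notin> P}"
  define B3 where "B3 = {(a,b,c). a \<in> A \<and> b \<in> A \<and> c \<in> A \<and> b - c \<notin> P}"
  have fBad: "finite Bad" by (rule finite_subset[of _ "A \<times> A"]) (auto simp: Bad_def fA)
  have bb: "real (card Bad) \<le> (real (card A))^2 / 11"
    using bad_bound[OF fA] unfolding Bad_def P_def .
  have c1: "card B1 \<le> card Bad * card A"
    by (rule inj_bound[where h="\<lambda>(a,b,c). ((a,b),c)"]) (use fBad in \<open>auto simp: inj_on_def B1_def Bad_def fA\<close>)
  have c2: "card B2 \<le> card Bad * card A"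
    by (rule inj_bound[where h="\<lambda>(a,b,c). ((a,c),b)"]) (use fBad in \<open>auto simp: inj_on_def B2_def Bad_def fA\<close>)
  have c3: "card B3 \<le> card Bad * card A"
    by (rule inj_bound[where h="\<lambda>(a,b,c). ((b,c),a)"]) (use fBad in \<open>auto simp: inj_on_def B3_def Bad_def fA\<close>)
  have fT: "finite T" by (rule finite_subset[of _ "A \<times> A \<times> A"]) (auto simp: T_def fA)
  have fB1: "finite B1" by (rule finite_subset[of _ "A \<times> A \<times> A"]) (auto simp: B1_def fA)
  have fB2: "finite B2" by (rule finite_subset[of _ "A \<times> A \<times> A"]) (auto simp: B2_def fA)
  have fB3: "finite B3" by (rule finite_subset[of _ "A \<times> A \<times> A"]) (auto simp: B3_def fA)
  have sub: "A \<times> A \<times> A \<subseteq> T \<union> B1 \<union> B2 \<union> B3"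
    unfolding T_def B1_def B2_def B3_def by auto
  have "card A ^ 3 = card (A \<times> A \<times> A)" by (simp add: card_cartesian_product power3_eq_cube mult.assoc)
  also have "\<dots> \<le> card (T \<union> B1 \<union> B2 \<union> B3)"
    using sub fT fB1 fB2 fB3 by (intro card_mono) auto
  also have "\<dots> \<le> card T + card B1 + card B2 + card B3"
    by (meson add_le_mono card_Un_le le_refl order_trans)
  finally have "card A ^ 3 \<le> card T + card B1 + card B2 + card B3" .
  hence "real (card A) ^ 3 \<le> real (card T) + real (card B1) + real (card B2) + real (card B3)"
    by (metis of_nat_add of_nat_le_iff of_nat_power)
  moreover have "real (card B1) \<le> real (card Bad) * real (card A)"
    "real (card B2) \<le> real (card Bad) * real (card A)"
    "real (card B3) \<le> real (card Bad) * real (card A)"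
    using c1 c2 c3 by (metis of_nat_le_iff of_nat_mult)+
  moreover have "real (card Bad) * real (card A) \<le> (real (card A))^2 / 11 * real (card A)"
    using bb by (intro mult_right_mono) auto
  ultimately have "real (card A) ^ 3 \<le> real (card T) + 3 * ((real (card A))^2 / 11 * real (card A))"
    by linarith
  thus ?thesis unfolding T_def by (simp add: power3_eq_cube power2_eq_square)
qed

lemma W_bound:
  assumes fA: "finite A"
  shows "card {(x, y). x \<in> A \<times> A \<times> A \<and> y \<in> A \<times> A \<times> A \<and>
      (\<lambda>(a,b,c). (a - c, b - c)) x = (\<lambda>(a,b,c). (a - c, b - c)) y} \<le> E3 A"
proof -
  define R where "R t = {(u, v). u \<in> A \<and> v \<in> A \<and> t = u - v}" for t
  define W where "W = {(x, y). x \<in> A \<times> A \<times> A \<and> y \<in> A \<times> A \<times> A \<and>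
      (\<lambda>(a,b,c). (a - c, b - c)) x = (\<lambda>(a,b,c). (a - c, b - c)) y}"
  define \<phi> where "\<phi> = (\<lambda>((a::real,b::real,c::real),(a'::real,b'::real,c'::real)). (c - c', ((a,a'),(b,b'),(c,c'))))"
  have fD: "finite (diffset A A)" using finite_diffset[OF fA] .
  have fR: "finite (R t)" for t unfolding R_def using finite_R[OF fA] .
  have inj: "inj_on \<phi> W" unfolding inj_on_def \<phi>_def by auto
  have img: "\<phi> ` W \<subseteq> Sigma (diffset A A) (\<lambda>t. R t \<times> R t \<times> R t)"
  proof
    fix z assume "z \<in> \<phi> ` W"
    then obtain a b c a' b' c' where z: "z = \<phi> ((a,b,c),(a',b',c'))" and w: "((a,b,c),(a',b',c')) \<in> W"
      by auto
    from w have m: "a \<in> A" "b \<in> A" "c \<in> A" "a' \<in> A" "b' \<in> A" "c' \<in> A"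
      and e: "a - c = a' - c'" "b - c = b' - c'" unfolding W_def by auto
    have "c - c' \<in> diffset A A" unfolding diffset_def using m by auto
    moreover have "a - a' = c - c'" "b - b' = c - c'" using e by linarith+
    ultimately show "z \<in> Sigma (diffset A A) (\<lambda>t. R t \<times> R t \<times> R t)"
      unfolding z \<phi>_def R_def using m by auto
  qed
  have "card W \<le> card (Sigma (diffset A A) (\<lambda>t. R t \<times> R t \<times> R t))"
    using card_inj_on_le[OF inj img] fD fR by auto
  also have "\<dots> = (\<Sum>t\<in>diffset A A. card (R t \<times> R t \<times> R t))"
    using fD fR by (simp add: card_SigmaI)
  also have "\<dots> = E3 A"
    unfolding E3_def delta_def R_def by (simp add: card_cartesian_product power3_eq_cube mult.assoc)
  finally show ?thesis unfolding W_def .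
qed

lemma sumdelta_eq:
  assumes fP: "finite P"
  shows "(\<Sum>x\<in>P. delta P P x) = card {(p,q). p \<in> P \<and> q \<in> P \<and> p - q \<in> P}"
proof -
  define S where "S = {(p,q). p \<in> P \<and> q \<in> P \<and> p - q \<in> P}"
  have fS: "finite S" by (rule finite_subset[of _ "P \<times> P"]) (auto simp: S_def fP)
  have img: "(\<lambda>(p,q). p - q) ` S \<subseteq> P" unfolding S_def by auto
  have "card S = (\<Sum>y\<in>P. card {x \<in> S. (\<lambda>(p,q). p - q) x = y})"
    using sum.group[OF fS fP img, of "\<lambda>_. 1::nat"] by simp
  also have "\<dots> = (\<Sum>y\<in>P. delta P P y)"
  proof (rule sum.cong)
    fix y assume "y \<in> P"
    hence "{x \<in> S. (\<lambda>(p,q). p - q) x = y} = {(u, v). u \<in> P \<and> v \<in> P \<and> y = u - v}"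
      unfolding S_def by auto
    thus "card {x \<in> S. (\<lambda>(p,q). p - q) x = y} = delta P P y" by (simp add: delta_def)
  qed simp
  finally show ?thesis unfolding S_def by simp
qed

theorem lemma1p6:
  shows "\<exists>C::real. C > 0 \<and> (\<exists>N::nat. \<forall>A::real set. finite A \<and> card A \<ge> N \<longrightarrow>
     (real (card A))^6 \<le> C * real (E3 A) * real (\<Sum>x\<in>popular A. delta (popular A) (popular A) x))"
proof (intro exI conjI allI impI)
  show "(0::real) < 121/64" by simp
  fix A :: "real set"
  assume "finite A \<and> 0 \<le> card A"
  hence fA: "finite A" by simp
  define P where "P = popular A"
  define S where "S = {(p,q). p \<in> P \<and> q \<in> P \<and> p - q \<in> P}"
  define T where "T = {(a,b,c). a \<in> A \<and> b \<in> A \<and> c \<in> A \<and> a - b \<in> P \<and> a - c \<in> P \<and> b - c \<in> P}"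
  define g where "g = (\<lambda>(a::real,b::real,c::real). (a - c, b - c))"
  define F where "F s = {x \<in> T. g x = s}" for s
  define W where "W = {(x, y). x \<in> A \<times> A \<times> A \<and> y \<in> A \<times> A \<times> A \<and> g x = g y}"
  have fP: "finite P" using finite_subset[OF popular_sub finite_diffset[OF fA]] P_def by simp
  have fS: "finite S" by (rule finite_subset[of _ "P \<times> P"]) (auto simp: S_def fP)
  have fT: "finite T" by (rule finite_subset[of _ "A \<times> A \<times> A"]) (auto simp: T_def fA)
  have fW: "finite W" by (rule finite_subset[of _ "(A \<times> A \<times> A) \<times> (A \<times> A \<times> A)"]) (auto simp: W_def fA)
  have fF: "finite (F s)" for s using fT unfolding F_def by simp
  have img: "g ` T \<subseteq> S" unfolding T_def S_def g_def by auto
  have cT: "card T = (\<Sum>s\<in>S. card (F s))"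
    using sum.group[OF fT fS img, of "\<lambda>_. 1::nat"] unfolding F_def by simp
  have "(\<Sum>s\<in>S. card (F s) ^ 2) = (\<Sum>s\<in>S. card (F s \<times> F s))"
    by (simp add: card_cartesian_product power2_eq_square)
  also have "\<dots> = card (\<Union>s\<in>S. F s \<times> F s)"
    by (rule card_UN_disjoint[symmetric]) (use fS fF in \<open>auto simp: F_def\<close>)
  also have "\<dots> \<le> card W"
    by (rule card_mono[OF fW]) (auto simp: F_def W_def T_def)
  also have "\<dots> \<le> E3 A" using W_bound[OF fA] unfolding W_def g_def .
  finally have sq: "(\<Sum>s\<in>S. card (F s) ^ 2) \<le> E3 A" .
  have "(real (card T))^2 = (\<Sum>s\<in>S. real (card (F s)) * 1)^2" using cT by simp
  also have "\<dots> \<le> (\<Sum>s\<in>S. (real (card (F s)))^2) * (\<Sum>s\<in>S. 1^2)"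
    by (rule Cauchy_Schwarz_ineq_sum)
  also have "\<dots> = real (\<Sum>s\<in>S. card (F s) ^ 2) * real (card S)" by simp
  also have "\<dots> \<le> real (E3 A) * real (card S)"
    using of_nat_mono[OF sq, where ?'a=real] by (intro mult_right_mono) auto
  finally have cs: "(real (card T))^2 \<le> real (E3 A) * real (card S)" .
  have tb: "8/11 * (real (card A))^3 \<le> real (card T)"
    using T_bound[OF fA] unfolding T_def P_def .
  have "(8/11 * (real (card A))^3)^2 \<le> (real (card T))^2"
    using tb by (intro power_mono) auto
  moreover have "(8/11 * (real (card A))^3)^2 = 64/121 * (real (card A))^6"
    by (simp add: power_mult_distrib power_divide flip: power_mult)
  ultimately have "64/121 * (real (card A))^6 \<le> real (E3 A) * real (card S)"
    using cs by linarith
  hence "(real (card A))^6 \<le> 121/64 * real (E3 A) * real (card S)" by simp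
  thus "(real (card A))^6 \<le> 121/64 * real (E3 A) * real (\<Sum>x\<in>popular A. delta (popular A) (popular A) x)"
    using sumdelta_eq[OF fP] unfolding S_def P_def by simp
qed

end
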